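(* (a) Let $\alpha:(-\epsilon,\epsilon)\to M^1$, $x\mapsto(z(x),\zeta(x))$, be a smooth embedding satisfying $z(0)=0$, $z(x)\neq0$ for all $x\neq0$, and $(z(-x),\zeta(-x))=(-z(x),\zeta(x))$ for all $x$, and let $c=\{\zeta(x)\mid x\in(-\epsilon,\epsilon)\}\subset\mathbb{C}$. Then the map $\eta:[0,\epsilon^2)\to c$, $x\mapsto\zeta(\sqrt{x})$, is a diffeomorphism, so $c$ is a regular curve with boundary $\partial c=\{\zeta(0)\}$. (b) Let $\gamma:S^1\to M^1$, $u\mapsto(z(u),\zeta(u))$, be a symmetric circle. Then $c=\{\zeta(u)\mid u\in S^1\}\subset\mathbb{C}$ is a regular curve with boundary $\partial c=\{\zeta(0),\zeta(\pi)\}$.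
   Context: $f$ is a complex polynomial in one variable all of whose zeros are simple, and $M^1=\{(z,\zeta)\in\mathbb{C}^2\mid z^2=f(\zeta)\}$. $S^1=\mathbb{R}/2\pi\mathbb{Z}$. A symmetric circle is a smooth embedding $\gamma:S^1\to M^1$, $u\mapsto(z(u),\zeta(u))$, such that $(z(-u),\zeta(-u))=(-z(u),\zeta(u))$ for all $u$ and $z(u)\neq0$ for all $u\neq0,\pi$. *)

theory Defs
  imports "HOL-Analysis.Analysis" "HOL-Computational_Algebra.Polynomial"
begin

definition M1 :: "complex poly \<Rightarrow> (complex \<times> complex) set" where
  "M1 f = {(z, w). z ^ 2 = poly f w}"

definition simple_zeros :: "complex poly \<Rightarrow> bool" where
  "simple_zeros f \<longleftrightarrow> (\<forall>a. poly f a = 0 \<longrightarrow> poly (pderiv f) a \<noteq> 0)"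

text \<open>C^\<infinity> on a real interval I (one-sided derivatives at endpoints belonging to I).\<close>
definition smooth_on :: "real set \<Rightarrow> (real \<Rightarrow> 'a::real_normed_vector) \<Rightarrow> bool" where
  "smooth_on I g \<longleftrightarrow> (\<exists>D :: nat \<Rightarrow> real \<Rightarrow> 'a.
      (\<forall>x\<in>I. D 0 x = g x) \<and>
      (\<forall>n. \<forall>x\<in>I. (D n has_vector_derivative D (Suc n) x) (at x within I)))"

definition smooth_embedding :: "real set \<Rightarrow> (real \<Rightarrow> 'a::real_normed_vector) \<Rightarrow> bool" where
  "smooth_embedding I g \<longleftrightarrow> smooth_on I g \<and>
      (\<forall>x\<in>I. vector_derivative g (at x within I) \<noteq> 0) \<and>
      inj_on g I \<and> (\<exists>h. homeomorphism I (g ` I) g h)"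

definition regular_curve_with_boundary :: "complex set \<Rightarrow> complex set \<Rightarrow> bool" where
  "regular_curve_with_boundary c B \<longleftrightarrow> B \<subseteq> c \<and>
     (\<forall>p\<in>c. \<exists>U \<phi>. open U \<and> p \<in> U \<and> \<phi> 0 = p \<and>
        (let I = (if p \<in> B then {0..<1} else {-1<..<1}) in
           smooth_embedding I \<phi> \<and> \<phi> ` I = c \<inter> U))"

text \<open>Symmetric circle: gamma = (z, zeta) viewed as a 2pi-periodic function on R (S^1 = R/2piZ).\<close>
definition symmetric_circle :: "complex poly \<Rightarrow> (real \<Rightarrow> complex) \<Rightarrow> (real \<Rightarrow> complex) \<Rightarrow> bool" where
  "symmetric_circle f z w \<longleftrightarrow>
     (\<forall>u. z (u + 2 * pi) = z u \<and> w (u + 2 * pi) = w u) \<and>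
     smooth_on UNIV (\<lambda>u. (z u, w u)) \<and>
     (\<forall>u. vector_derivative (\<lambda>u. (z u, w u)) (at u) \<noteq> 0) \<and>
     inj_on (\<lambda>u. (z u, w u)) {0..<2 * pi} \<and>
     (\<forall>u. (z u, w u) \<in> M1 f) \<and>
     (\<forall>u. z (- u) = - z u \<and> w (- u) = w u) \<and>
     (\<forall>u. (\<forall>k::int. u \<noteq> of_int k * pi) \<longrightarrow> z u \<noteq> 0)"

end

theory Submission
  imports Defs
begin


definition tower :: "real set \<Rightarrow> (nat \<Rightarrow> real \<Rightarrow> 'a::real_normed_vector) \<Rightarrow> bool" where
  "tower I D \<longleftrightarrow> (\<forall>n. \<forall>x\<in>I. (D n has_vector_derivative D (Suc n) x) (at x within I))"

lemma smooth_on_tower: "smooth_on I g \<longleftrightarrow> (\<exists>D. tower I D \<and> (\<forall>x\<in>I. D 0 x = g x))"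
  unfolding smooth_on_def tower_def by blast

lemma tower_open_at:
  assumes "tower J D" "open J" "x \<in> J"
  shows "(D n has_vector_derivative D (Suc n) x) (at x)"
  using assms unfolding tower_def by (metis at_within_open)

lemma tower_cont:
  assumes "tower J D"
  shows "continuous_on J (D n)"
  using assms unfolding tower_def
  by (meson continuous_on_eq_continuous_within has_vector_derivative_continuous)

lemma hvd_scale: "(f has_vector_derivative f') F \<Longrightarrow> ((\<lambda>x. c *\<^sub>R f x) has_vector_derivative c *\<^sub>R f') F"
  by (rule bounded_linear.has_vector_derivative[OF bounded_linear_scaleR_right])

lemma mult_in_ival: "x \<in> {-a<..<a} \<Longrightarrow> s \<in> {0..1} \<Longrightarrow> s * x \<in> {-a<..<(a::real)}"
proof -
  assume x: "x \<in> {-a<..<a}" and s: "s \<in> {0..1}"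
  have "\<bar>s * x\<bar> \<le> \<bar>x\<bar>" using s by (simp add: abs_mult mult_left_le_one_le)
  thus ?thesis using x by auto
qed

lemma hadamard:
  fixes D :: "nat \<Rightarrow> real \<Rightarrow> complex"
  assumes T: "tower {-a<..<a} D" and D00: "D 0 0 = 0" and a: "a > 0"
  defines "E \<equiv> (\<lambda>n t. integral (cbox 0 1) (\<lambda>s::real. (s ^ n) *\<^sub>R D (Suc n) (s * t)))"
  shows "tower {-a<..<a} E" "\<forall>t\<in>{-a<..<a}. D 0 t = t *\<^sub>R E 0 t"
        "E 0 0 = D 1 0" "E 1 0 = D 2 0 / 2"
proof -
  let ?J = "{-a<..<a}"
  have ctn: "continuous_on ?J (D n)" for n using tower_cont[OF T] .
  have der: "((\<lambda>t. (s ^ n) *\<^sub>R D (Suc n) (s * t)) has_vector_derivative (s ^ Suc n) *\<^sub>R D (Suc (Suc n)) (s * t)) (at t within ?J)"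
    if "t \<in> ?J" "s \<in> cbox 0 1" for s t n
  proof -
    have st: "s * t \<in> ?J" using mult_in_ival that by auto
    have d1: "((\<lambda>t. s * t) has_vector_derivative s) (at t)"
      by (auto intro!: derivative_eq_intros simp: has_real_derivative_iff_has_vector_derivative[symmetric])
    have d2: "(D (Suc n) has_vector_derivative D (Suc (Suc n)) (s*t)) (at (s*t))"
      using tower_open_at[OF T _ st] by simp
    have "((D (Suc n) \<circ> (\<lambda>t. s * t)) has_vector_derivative s *\<^sub>R D (Suc (Suc n)) (s*t)) (at t)"
      using vector_diff_chain_at[OF d1 d2] .
    hence "((\<lambda>t. (s ^ n) *\<^sub>R D (Suc n) (s * t)) has_vector_derivative (s^n) *\<^sub>R (s *\<^sub>R D (Suc (Suc n)) (s*t))) (at t)"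
      by (intro hvd_scale) (simp add: o_def)
    thus ?thesis by (simp add: has_vector_derivative_at_within mult.commute)
  qed
  have contf: "continuous_on (?J \<times> cbox 0 1) (\<lambda>(t, s). (s ^ m) *\<^sub>R D k (s * t))" for m k
  proof -
    have "continuous_on (?J \<times> cbox 0 1) (\<lambda>p. D k (snd p * fst p))"
      by (rule continuous_on_compose2[OF ctn[of k]]) (auto intro!: continuous_intros mult_in_ival)
    thus ?thesis by (auto simp: split_beta intro!: continuous_intros)
  qed
  show "tower ?J E"
    unfolding tower_def E_def
  proof (intro allI ballI)
    fix n t assume t: "t \<in> ?J"
    show "((\<lambda>t. integral (cbox 0 1) (\<lambda>s::real. s ^ n *\<^sub>R D (Suc n) (s * t))) has_vector_derivative
        integral (cbox 0 1) (\<lambda>s::real. s ^ Suc n *\<^sub>R D (Suc (Suc n)) (s * t))) (at t within ?J)"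
    proof (rule leibniz_rule_vector_derivative[where fx="\<lambda>t s. s ^ Suc n *\<^sub>R D (Suc (Suc n)) (s * t)"])
      show "continuous_on (?J \<times> cbox 0 1) (\<lambda>(t, s). s ^ Suc n *\<^sub>R D (Suc (Suc n)) (s * t))"
        by (rule contf)
      fix x assume x: "x \<in> ?J"
      have "continuous_on (cbox 0 1) (\<lambda>s::real. s ^ n *\<^sub>R D (Suc n) (s * x))"
      proof -
        have "continuous_on (cbox 0 1) (\<lambda>s::real. D (Suc n) (s * x))"
          by (rule continuous_on_compose2[OF ctn[of "Suc n"]]) (auto intro!: continuous_intros mult_in_ival x)
        thus ?thesis by (auto intro!: continuous_intros)
      qed
      thus "(\<lambda>s::real. s ^ n *\<^sub>R D (Suc n) (s * x)) integrable_on cbox 0 1"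
        by (rule integrable_continuous)
    qed (use der t in auto)
  qed
  show "\<forall>t\<in>?J. D 0 t = t *\<^sub>R E 0 t"
  proof
    fix t assume t: "t \<in> ?J"
    have "((\<lambda>s. D 0 (s * t)) has_vector_derivative t *\<^sub>R D 1 (s * t)) (at s within {0..1})"
      if "s \<in> {0..1}" for s
    proof -
      have st: "s * t \<in> ?J" using mult_in_ival that t by auto
      have d1: "((\<lambda>s. s * t) has_vector_derivative t) (at s)"
        by (auto intro!: derivative_eq_intros simp: has_real_derivative_iff_has_vector_derivative[symmetric])
      have "((D 0 \<circ> (\<lambda>s. s * t)) has_vector_derivative t *\<^sub>R D 1 (s*t)) (at s)"
        using vector_diff_chain_at[OF d1 tower_open_at[OF T _ st, of 0]] by simp
      thus ?thesis by (simp add: has_vector_derivative_at_within o_def)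
    qed
    from fundamental_theorem_of_calculus[OF _ this]
    have "((\<lambda>s. t *\<^sub>R D 1 (s * t)) has_integral D 0 t) {0..1}" using D00 by simp
    hence "((\<lambda>s. D 1 (s * t)) has_integral D 0 t /\<^sub>R t) {0..1}" if "t \<noteq> 0"
      using has_integral_cmul[of "\<lambda>s. t *\<^sub>R D 1 (s * t)" "D 0 t" "{0..1}" "inverse t"] that
      by simp
    hence "integral {0..1} (\<lambda>s. D 1 (s * t)) = D 0 t /\<^sub>R t" if "t \<noteq> 0"
      using that integral_unique by blast
    thus "D 0 t = t *\<^sub>R E 0 t"
      by (cases "t = 0") (auto simp: E_def D00 cbox_interval)
  qed
  show "E 0 0 = D 1 0" by (simp add: E_def)
  have "((\<lambda>s::real. s ^ 1) has_integral (1 ^ 2 / 2 - 0 ^ 2 / 2)) {0..1}"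
    by (rule fundamental_theorem_of_calculus) (auto intro!: derivative_eq_intros simp: has_real_derivative_iff_has_vector_derivative[symmetric])
  hence "((\<lambda>s::real. s) has_integral 1/2) {0..1}" by simp
  from has_integral_scaleR_left[OF this, of "D 2 0"]
  have "integral {0..1} (\<lambda>s::real. s *\<^sub>R D 2 0) = (1/2) *\<^sub>R D 2 0"
    by (simp add: integral_unique)
  thus "E 1 0 = D 2 0 / 2"
    by (simp add: E_def cbox_interval scaleR_conv_of_real numeral_2_eq_2)
qed

lemma hadamard_ex:
  fixes D :: "nat \<Rightarrow> real \<Rightarrow> complex"
  assumes T: "tower {-a<..<a} D" and D00: "D 0 0 = 0" and a: "a > 0"
  obtains E where "tower {-a<..<a} E" "\<forall>t\<in>{-a<..<a}. D 0 t = t *\<^sub>R E 0 t"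
        "E 0 0 = D 1 0" "E 1 0 = D 2 0 / 2"
  using hadamard[OF assms] by blast

lemma tower_shift: "tower J D \<Longrightarrow> tower J (\<lambda>n. D (Suc n))"
  unfolding tower_def by blast

lemma tower_scale: "tower J D \<Longrightarrow> tower J (\<lambda>n t. c *\<^sub>R D n t)"
  unfolding tower_def by (blast intro: hvd_scale)

lemma even_deriv_odd:
  fixes D :: "nat \<Rightarrow> real \<Rightarrow> complex"
  assumes T: "tower {-a<..<a} D" and ev: "\<forall>t\<in>{-a<..<a}. D 0 (-t) = D 0 t"
    and t: "t \<in> {-a<..<a}"
  shows "D 1 (-t) = - D 1 t"
proof -
  let ?J = "{-a<..<a}"
  have mt: "-t \<in> ?J" using t by auto
  have d1: "((\<lambda>s. -s) has_vector_derivative (-1)) (at t)"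
    by (auto intro!: derivative_eq_intros)
  have "((D 0 \<circ> (\<lambda>s. -s)) has_vector_derivative (-1) *\<^sub>R D 1 (-t)) (at t)"
    using vector_diff_chain_at[OF d1 tower_open_at[OF T _ mt, of 0]] by simp
  hence "(D 0 has_vector_derivative (-1) *\<^sub>R D 1 (-t)) (at t)"
    by (rule has_vector_derivative_transform_within_open[OF _ open_greaterThanLessThan t])
       (use ev in \<open>auto simp: o_def\<close>)
  from vector_derivative_unique_at[OF this tower_open_at[OF T _ t, of 0]]
  have "- D 1 (-t) = D 1 t" by simp
  thus ?thesis by (metis minus_minus)
qed

lemma even_step:
  fixes D :: "nat \<Rightarrow> real \<Rightarrow> complex"
  assumes a: "a > 0" and T: "tower {-a<..<a} D" and ev: "\<forall>t\<in>{-a<..<a}. D 0 (-t) = D 0 t"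
  shows "\<exists>E. tower {-a<..<a} E \<and> (\<forall>t\<in>{-a<..<a}. E 0 (-t) = E 0 t) \<and> E 0 0 = D 2 0 / 2 \<and>
     (\<forall>x\<in>{0..<a\<^sup>2}. ((\<lambda>x. D 0 (sqrt x)) has_vector_derivative E 0 (sqrt x)) (at x within {0..<a\<^sup>2}))"
proof -
  let ?J = "{-a<..<a}"
  let ?S = "{0..<a\<^sup>2}"
  have sqJ: "sqrt x \<in> ?J" if "x \<in> ?S" for x
  proof -
    have "sqrt x < a" using that a real_sqrt_less_mono[of x "a^2"] by simp
    moreover have "0 \<le> sqrt x" using that by simp
    ultimately show ?thesis using a unfolding greaterThanLessThan_iff by linarith
  qed
  have odd: "D 1 (-t) = - D 1 t" if "t \<in> ?J" for t using even_deriv_odd[OF T ev that] .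
  have D10: "D 1 0 = 0" using odd[of 0] a by simp
  define D' where "D' = (\<lambda>n. D (Suc n))"
  have T': "tower ?J D'" unfolding D'_def by (rule tower_shift[OF T])
  have D'0: "D' 0 0 = 0" using D10 by (simp add: D'_def)
  obtain E' where H: "tower ?J E'" "\<forall>t\<in>?J. D' 0 t = t *\<^sub>R E' 0 t"
        "E' 0 0 = D' 1 0" "E' 1 0 = D' 2 0 / 2" by (rule hadamard_ex[OF T' D'0 a])
  define E where "E = (\<lambda>n t. (1/2::real) *\<^sub>R E' n t)"
  have TE: "tower ?J E" unfolding E_def by (rule tower_scale[OF H(1)])
  have evE: "E 0 (-t) = E 0 t" if t: "t \<in> ?J" for t
  proof (cases "t = 0")
    case False
    have mt: "-t \<in> ?J" using t by auto
    have "(-t) *\<^sub>R E' 0 (-t) = - (t *\<^sub>R E' 0 t)"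
      using H(2) t mt odd[OF t] by (simp add: D'_def)
    hence "t *\<^sub>R E' 0 (-t) = t *\<^sub>R E' 0 t" by simp
    thus ?thesis using False by (simp add: E_def)
  qed simp
  have E00: "E 0 0 = D 2 0 / 2"
    using H(3) by (simp add: E_def D'_def scaleR_conv_of_real numeral_2_eq_2)
  have derpos: "((\<lambda>x. D 0 (sqrt x)) has_vector_derivative E 0 (sqrt x)) (at x within ?S)"
    if x: "x \<in> ?S" "x > 0" for x
  proof -
    have d1: "(sqrt has_vector_derivative (inverse (sqrt x) / 2)) (at x)"
      using DERIV_real_sqrt[OF x(2)] by (simp add: has_real_derivative_iff_has_vector_derivative)
    have "((D 0 \<circ> sqrt) has_vector_derivative (inverse (sqrt x) / 2) *\<^sub>R D 1 (sqrt x)) (at x)"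
      using vector_diff_chain_at[OF d1 tower_open_at[OF T _ sqJ[OF x(1)], of 0]] by simp
    moreover have "(inverse (sqrt x) / 2) *\<^sub>R D 1 (sqrt x) = E 0 (sqrt x)"
    proof -
      have "D 1 (sqrt x) = sqrt x *\<^sub>R E' 0 (sqrt x)"
        using H(2) sqJ[OF x(1)] by (simp add: D'_def)
      thus ?thesis using x(2) by (simp add: E_def)
    qed
    ultimately show ?thesis by (simp add: o_def has_vector_derivative_at_within)
  qed
  define G where "G = (\<lambda>n. if n = 0 then (\<lambda>t. D 0 t - D 0 0) else D n)"
  have TG: "tower ?J G"
    unfolding tower_def
  proof (intro allI ballI)
    fix n t assume t: "t \<in> ?J"
    show "(G n has_vector_derivative G (Suc n) t) (at t within ?J)"
      using T t unfolding tower_def G_def by (cases "n = 0") (auto simp: has_vector_derivative_diff_const)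
  qed
  have G00: "G 0 0 = 0" by (simp add: G_def)
  obtain V where HV: "tower ?J V" "\<forall>t\<in>?J. G 0 t = t *\<^sub>R V 0 t"
        "V 0 0 = G 1 0" "V 1 0 = G 2 0 / 2" by (rule hadamard_ex[OF TG G00 a])
  have V00: "V 0 0 = 0" using HV(3) D10 by (simp add: G_def)
  obtain K where HK: "tower ?J K" "\<forall>t\<in>?J. V 0 t = t *\<^sub>R K 0 t"
        "K 0 0 = V 1 0" "K 1 0 = V 2 0 / 2" by (rule hadamard_ex[OF HV(1) V00 a])
  have V10: "V 1 0 = D 2 0 / 2" using HV(4) by (simp add: G_def)
  have K00: "K 0 0 = E 0 0" using HK(3) V10 E00 by metis
  have Fx: "D 0 (sqrt x) = D 0 0 + x *\<^sub>R K 0 (sqrt x)" if x: "x \<in> ?S" for x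
  proof -
    have "G 0 (sqrt x) = sqrt x *\<^sub>R V 0 (sqrt x)" using HV(2) sqJ[OF x] by blast
    also have "V 0 (sqrt x) = sqrt x *\<^sub>R K 0 (sqrt x)" using HK(2) sqJ[OF x] by blast
    finally show ?thesis using x by (simp add: G_def algebra_simps)
  qed
  have contK: "isCont (K 0) 0"
    using tower_open_at[OF HK(1) _, of 0 0] a has_vector_derivative_continuous by auto
  have der0: "((\<lambda>x. D 0 (sqrt x)) has_vector_derivative E 0 (sqrt 0)) (at 0 within ?S)"
    unfolding has_vector_derivative_def has_derivative_at_within
  proof (intro conjI)
    show "bounded_linear (\<lambda>h. h *\<^sub>R E 0 (sqrt 0))" by (rule bounded_linear_scaleR_left)
    have c1: "isCont (\<lambda>y. K 0 (sqrt y)) 0"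
    proof -
      have "isCont sqrt (0::real)" by (rule isCont_real_sqrt)
      from continuous_at_compose[unfolded o_def, OF this, of "K 0"] contK show ?thesis by simp
    qed
    have "((\<lambda>y. K 0 (sqrt y)) \<longlongrightarrow> K 0 (sqrt 0)) (at 0 within ?S)"
      using continuous_within[THEN iffD1, OF continuous_at_imp_continuous_at_within[OF c1]] .
    from LIM_zero[OF this] have "((\<lambda>y. K 0 (sqrt y) - K 0 0) \<longlongrightarrow> 0) (at 0 within ?S)"
      by simp
    moreover have "\<forall>\<^sub>F y in at 0 within ?S. K 0 (sqrt y) - K 0 0 =
        (D 0 (sqrt y) - D 0 (sqrt 0) - (y - 0) *\<^sub>R E 0 (sqrt 0)) /\<^sub>R norm (y - 0)"
      unfolding eventually_at_filter
    proof (intro always_eventually allI impI)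
      fix y assume y: "y \<noteq> 0" "y \<in> ?S"
      hence yp: "y > 0" by auto
      have "D 0 (sqrt y) - D 0 (sqrt 0) - (y - 0) *\<^sub>R E 0 (sqrt 0) = y *\<^sub>R (K 0 (sqrt y) - K 0 0)"
        using Fx[OF y(2)] K00 by (simp add: scaleR_diff_right)
      thus "K 0 (sqrt y) - K 0 0 = (D 0 (sqrt y) - D 0 (sqrt 0) - (y - 0) *\<^sub>R E 0 (sqrt 0)) /\<^sub>R norm (y - 0)"
        using yp by simp
    qed
    ultimately show "((\<lambda>y. (D 0 (sqrt y) - D 0 (sqrt 0) - (y - 0) *\<^sub>R E 0 (sqrt 0)) /\<^sub>R norm (y - 0)) \<longlongrightarrow> 0) (at 0 within ?S)"
      by (rule Lim_transform_eventually)
  qed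
  have "\<forall>x\<in>?S. ((\<lambda>x. D 0 (sqrt x)) has_vector_derivative E 0 (sqrt x)) (at x within ?S)"
  proof
    fix x assume x: "x \<in> ?S"
    show "((\<lambda>x. D 0 (sqrt x)) has_vector_derivative E 0 (sqrt x)) (at x within ?S)"
    proof (cases "x = 0")
      case True thus ?thesis using der0 by simp
    next
      case False thus ?thesis using derpos[OF x] x by simp
    qed
  qed
  thus ?thesis using TE evE E00 by blast
qed

lemma whitney:
  fixes D :: "nat \<Rightarrow> real \<Rightarrow> complex"
  assumes a: "a > 0" and T: "tower {-a<..<a} D" and ev: "\<forall>t\<in>{-a<..<a}. D 0 (-t) = D 0 t"
  shows "\<exists>F. tower {0..<a\<^sup>2} F \<and> (\<forall>x\<in>{0..<a\<^sup>2}. F 0 x = D 0 (sqrt x)) \<and> F 1 0 = D 2 0 / 2"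
proof -
  let ?J = "{-a<..<a}"
  let ?S = "{0..<a\<^sup>2}"
  define P where "P = (\<lambda>D :: nat \<Rightarrow> real \<Rightarrow> complex. tower ?J D \<and> (\<forall>t\<in>?J. D 0 (-t) = D 0 t))"
  define Q where "Q = (\<lambda>(D :: nat \<Rightarrow> real \<Rightarrow> complex) E. P E \<and> E 0 0 = D 2 0 / 2 \<and>
     (\<forall>x\<in>?S. ((\<lambda>x. D 0 (sqrt x)) has_vector_derivative E 0 (sqrt x)) (at x within ?S)))"
  define \<Phi> where "\<Phi> = (\<lambda>D. SOME E. Q D E)"
  have \<Phi>: "Q D (\<Phi> D)" if "P D" for D
  proof -
    from even_step[OF a] that obtain E where "Q D E" unfolding P_def Q_def by blast
    thus ?thesis unfolding \<Phi>_def by (rule someI[of "Q D"])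
  qed
  define Sq where "Sq = (\<lambda>n. (\<Phi> ^^ n) D)"
  have PS: "P (Sq n)" for n
  proof (induction n)
    case 0 thus ?case using T ev by (simp add: P_def Sq_def)
  next
    case (Suc n) thus ?case using \<Phi>[OF Suc] by (simp add: Q_def Sq_def)
  qed
  define F where "F = (\<lambda>n x. Sq n 0 (sqrt x))"
  have "tower ?S F"
    unfolding tower_def
  proof (intro allI ballI)
    fix n x assume x: "x \<in> ?S"
    have "Sq (Suc n) = \<Phi> (Sq n)" by (simp add: Sq_def)
    thus "(F n has_vector_derivative F (Suc n) x) (at x within ?S)"
      using \<Phi>[OF PS[of n]] x unfolding Q_def F_def by simp
  qed
  moreover have "F 1 0 = D 2 0 / 2"
    using \<Phi>[OF PS[of 0]] by (simp add: F_def Sq_def Q_def)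
  moreover have "\<forall>x\<in>?S. F 0 x = D 0 (sqrt x)" by (simp add: F_def Sq_def)
  ultimately show ?thesis by blast
qed



definition good :: "real set \<Rightarrow> (real \<Rightarrow> complex) \<Rightarrow> bool" where
  "good I g \<longleftrightarrow> smooth_on I g \<and> (\<forall>x\<in>I. vector_derivative g (at x within I) \<noteq> 0)"

lemma ntriv_Ico: "l < u \<Longrightarrow> x \<in> {l..<u} \<Longrightarrow> at x within {l..<(u::real)} \<noteq> bot"
  using trivial_limit_within[of x "{l..<u}"] islimpt_Ico[of l u x] by auto

lemma ntriv_Ioo: assumes "x \<in> {l<..<(u::real)}" shows "at x within {l<..<u} \<noteq> bot"
proof -
  have "at x within {l<..<u} = at x" by (rule at_within_open[OF assms open_greaterThanLessThan])
  thus ?thesis by simp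
qed

lemma rel1:
  fixes z w :: "real \<Rightarrow> complex"
  assumes J: "open J" "t \<in> J" and eq: "\<forall>s\<in>J. z s ^ 2 = poly f (w s)"
    and dz: "(z has_vector_derivative z') (at t)" and dw: "(w has_vector_derivative w') (at t)"
  shows "2 * z t * z' = w' * poly (pderiv f) (w t)"
proof -
  have d1: "((\<lambda>s. z s * z s) has_vector_derivative (z t * z' + z' * z t)) (at t)"
    using has_vector_derivative_mult[OF dz dz] .
  have "((poly f \<circ> w) has_vector_derivative w' * poly (pderiv f) (w t)) (at t)"
    by (rule field_vector_diff_chain_at[OF dw poly_DERIV])
  hence d2: "((\<lambda>s. z s * z s) has_vector_derivative w' * poly (pderiv f) (w t)) (at t)"
    by (rule has_vector_derivative_transform_within_open[OF _ J]) (use eq in \<open>auto simp: power2_eq_square\<close>)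
  from vector_derivative_unique_at[OF d1 d2] show ?thesis by (simp add: algebra_simps)
qed

lemma rel2:
  fixes Z W :: "nat \<Rightarrow> real \<Rightarrow> complex"
  assumes J: "open J" "0 \<in> J" and TZ: "tower J Z" and TW: "tower J W"
    and eq: "\<forall>s\<in>J. Z 0 s ^ 2 = poly f (W 0 s)"
    and Z00: "Z 0 0 = 0" and W10: "W 1 0 = 0"
  shows "2 * Z 1 0 * Z 1 0 = W 2 0 * poly (pderiv f) (W 0 0)"
proof -
  have e1: "2 * Z 0 s * Z 1 s = W 1 s * poly (pderiv f) (W 0 s)" if "s \<in> J" for s
    using rel1[OF J(1) that eq tower_open_at[OF TZ J(1) that, of 0] tower_open_at[OF TW J(1) that, of 0]] by simp
  have dZ: "(Z n has_vector_derivative Z (Suc n) 0) (at 0)" for n using tower_open_at[OF TZ J(1) J(2)] .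
  have dW: "(W n has_vector_derivative W (Suc n) 0) (at 0)" for n using tower_open_at[OF TW J(1) J(2)] .
  have dZ1: "(Z 1 has_vector_derivative Z 2 0) (at 0)" using dZ[of 1] by (simp add: eval_nat_numeral)
  have dW1: "(W 1 has_vector_derivative W 2 0) (at 0)" using dW[of 1] by (simp add: eval_nat_numeral)
  have d2Z: "((\<lambda>s. 2 * Z 0 s) has_vector_derivative 2 * Z 1 0) (at 0)"
    using has_vector_derivative_mult[OF has_vector_derivative_const[of 2] dZ[of 0]] by simp
  have d1: "((\<lambda>s. 2 * Z 0 s * Z 1 s) has_vector_derivative (2 * Z 1 0 * Z 1 0)) (at 0)"
    using has_vector_derivative_mult[OF d2Z dZ1] Z00 by simp
  have dp: "((poly (pderiv f) \<circ> W 0) has_vector_derivative W 1 0 * poly (pderiv (pderiv f)) (W 0 0)) (at 0)"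
    using field_vector_diff_chain_at[OF dW[of 0] poly_DERIV] by simp
  have d2: "((\<lambda>s. W 1 s * poly (pderiv f) (W 0 s)) has_vector_derivative W 2 0 * poly (pderiv f) (W 0 0)) (at 0)"
    using has_vector_derivative_mult[OF dW1 dp] W10 by (simp add: o_def)
  have d2': "((\<lambda>s. 2 * Z 0 s * Z 1 s) has_vector_derivative W 2 0 * poly (pderiv f) (W 0 0)) (at 0)"
    by (rule has_vector_derivative_transform_within_open[OF d2 J]) (use e1 in auto)
  show ?thesis by (rule vector_derivative_unique_at[OF d1 d2'])
qed

lemma good_intro:
  assumes T: "tower I D" and g: "\<forall>x\<in>I. D 0 x = g x" and nb: "\<forall>x\<in>I. at x within I \<noteq> bot"
    and nz: "\<forall>x\<in>I. D 1 x \<noteq> 0"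
  shows "good I g"
  unfolding good_def
proof
  show "smooth_on I g" unfolding smooth_on_tower using T g by blast
  show "\<forall>x\<in>I. vector_derivative g (at x within I) \<noteq> 0"
  proof
    fix x assume x: "x \<in> I"
    have "(D 0 has_vector_derivative D 1 x) (at x within I)" using T x unfolding tower_def by simp
    hence "(g has_vector_derivative D 1 x) (at x within I)"
      by (rule has_vector_derivative_transform[OF x, rotated]) (use g in auto)
    hence "vector_derivative g (at x within I) = D 1 x"
      using vector_derivative_within nb x by blast
    thus "vector_derivative g (at x within I) \<noteq> 0" using nz x by simp
  qed
qed

lemma good_elim:
  assumes G: "good I g" and nb: "\<forall>x\<in>I. at x within I \<noteq> bot"
  obtains D where "tower I D" "\<forall>x\<in>I. D 0 x = g x" "\<forall>x\<in>I. D 1 x \<noteq> 0"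
proof -
  from G obtain D where T: "tower I D" and g: "\<forall>x\<in>I. D 0 x = g x"
    unfolding good_def smooth_on_tower by blast
  have "D 1 x \<noteq> 0" if x: "x \<in> I" for x
  proof -
    have "(D 0 has_vector_derivative D 1 x) (at x within I)" using T x unfolding tower_def by simp
    hence "(g has_vector_derivative D 1 x) (at x within I)"
      by (rule has_vector_derivative_transform[OF x, rotated]) (use g in auto)
    hence "vector_derivative g (at x within I) = D 1 x"
      using vector_derivative_within nb x by blast
    thus ?thesis using G x unfolding good_def by auto
  qed
  thus ?thesis using that T g by blast
qed

lemma local_model:
  fixes Z W :: "nat \<Rightarrow> real \<Rightarrow> complex" and w :: "real \<Rightarrow> complex"
  assumes a: "a > 0" and TZ: "tower {-a<..<a} Z" and TW: "tower {-a<..<a} W"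
    and eq: "\<forall>s\<in>{-a<..<a}. Z 0 s ^ 2 = poly f (W 0 s)"
    and Z00: "Z 0 0 = 0" and Znz: "\<forall>t\<in>{-a<..<a}. t \<noteq> 0 \<longrightarrow> Z 0 t \<noteq> 0"
    and ev: "\<forall>t\<in>{-a<..<a}. W 0 (-t) = W 0 t"
    and nz: "\<forall>t\<in>{-a<..<a}. Z 1 t \<noteq> 0 \<or> W 1 t \<noteq> 0"
    and ww: "\<forall>t\<in>{-a<..<a}. W 0 t = w t"
  shows "good {0..<a\<^sup>2} (\<lambda>x. w (sqrt x))"
proof -
  let ?J = "{-a<..<a}"
  let ?S = "{0..<a\<^sup>2}"
  have a2: "0 < a\<^sup>2" using a by simp
  have sqJ: "sqrt x \<in> ?J" if "x \<in> ?S" for x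
  proof -
    have "sqrt x < a" using that a real_sqrt_less_mono[of x "a^2"] by simp
    moreover have "0 \<le> sqrt x" using that by simp
    ultimately show ?thesis using a unfolding greaterThanLessThan_iff by linarith
  qed
  obtain F where TF: "tower ?S F" and F0: "\<forall>x\<in>?S. F 0 x = W 0 (sqrt x)" and F10: "F 1 0 = W 2 0 / 2"
    using whitney[OF a TW ev] by blast
  have J0: "0 \<in> ?J" using a by simp
  have W10: "W 1 0 = 0" using even_deriv_odd[OF TW ev J0] by simp
  have "2 * Z 1 0 * Z 1 0 = W 2 0 * poly (pderiv f) (W 0 0)"
    by (rule rel2[OF open_greaterThanLessThan J0 TZ TW eq Z00 W10])
  moreover have "Z 1 0 \<noteq> 0" using nz J0 W10 by auto
  ultimately have W20: "W 2 0 \<noteq> 0" by auto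
  show ?thesis
  proof (rule good_intro[OF TF])
    show "\<forall>x\<in>?S. F 0 x = w (sqrt x)" using F0 ww sqJ by auto
    show "\<forall>x\<in>?S. at x within ?S \<noteq> bot" using ntriv_Ico[OF a2] by blast
    show "\<forall>x\<in>?S. F 1 x \<noteq> 0"
    proof
      fix x assume x: "x \<in> ?S"
      show "F 1 x \<noteq> 0"
      proof (cases "x = 0")
        case True thus ?thesis using F10 W20 by (metis divide_eq_0_iff zero_neq_numeral)
      next
        case False
        hence xp: "x > 0" using x by auto
        let ?t = "sqrt x"
        have tJ: "?t \<in> ?J" using sqJ[OF x] .
        have d1: "(sqrt has_vector_derivative (inverse (sqrt x) / 2)) (at x)"
          using DERIV_real_sqrt[OF xp] by (simp add: has_real_derivative_iff_has_vector_derivative)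
        have "((W 0 \<circ> sqrt) has_vector_derivative (inverse (sqrt x) / 2) *\<^sub>R W 1 ?t) (at x)"
          using vector_diff_chain_at[OF d1 tower_open_at[OF TW _ tJ, of 0]] by simp
        hence c1: "(F 0 has_vector_derivative (inverse (sqrt x) / 2) *\<^sub>R W 1 ?t) (at x within ?S)"
          by (rule has_vector_derivative_transform[OF x, rotated, OF has_vector_derivative_at_within])
             (use F0 in auto)
        have c2: "(F 0 has_vector_derivative F 1 x) (at x within ?S)" using TF x unfolding tower_def by simp
        have Fe: "F 1 x = (inverse (sqrt x) / 2) *\<^sub>R W 1 ?t"
          using vector_derivative_unique_within[OF ntriv_Ico[OF a2 x] c2 c1] .
        have tnz: "?t \<noteq> 0" using xp by simp
        have "2 * Z 0 ?t * Z 1 ?t = W 1 ?t * poly (pderiv f) (W 0 ?t)"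
          using rel1[OF open_greaterThanLessThan tJ eq tower_open_at[OF TZ _ tJ, of 0] tower_open_at[OF TW _ tJ, of 0]] by simp
        moreover have "Z 0 ?t \<noteq> 0" using Znz tJ tnz by blast
        ultimately have "W 1 ?t \<noteq> 0" using nz tJ by auto
        thus ?thesis using Fe xp by simp
      qed
    qed
  qed
qed



lemma good_affine:
  assumes G: "good K \<sigma>" and nbK: "\<forall>x\<in>K. at x within K \<noteq> bot" and d: "\<delta> > 0"
    and sub: "\<forall>t\<in>I. x0 + \<delta> * t \<in> K" and nbI: "\<forall>t\<in>I. at t within I \<noteq> bot"
  shows "good I (\<lambda>t. \<sigma> (x0 + \<delta> * t))"
proof -
  obtain D where T: "tower K D" and D0: "\<forall>x\<in>K. D 0 x = \<sigma> x" and D1: "\<forall>x\<in>K. D 1 x \<noteq> 0"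
    using good_elim[OF G nbK] by blast
  let ?A = "\<lambda>t. x0 + \<delta> * t"
  define E where "E = (\<lambda>n t. (\<delta> ^ n) *\<^sub>R D n (?A t))"
  have TE: "tower I E"
    unfolding tower_def
  proof (intro allI ballI)
    fix n t assume t: "t \<in> I"
    have dA: "(?A has_vector_derivative \<delta>) (at t within I)"
      by (auto intro!: derivative_eq_intros simp: has_real_derivative_iff_has_vector_derivative[symmetric])
    have "(D n has_vector_derivative D (Suc n) (?A t)) (at (?A t) within K)"
      using T sub t unfolding tower_def by blast
    hence "(D n has_vector_derivative D (Suc n) (?A t)) (at (?A t) within ?A ` I)"
      by (rule has_vector_derivative_within_subset) (use sub in auto)
    from vector_diff_chain_within[OF dA this]
    have "((D n \<circ> ?A) has_vector_derivative \<delta> *\<^sub>R D (Suc n) (?A t)) (at t within I)" .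
    from hvd_scale[OF this, of "\<delta> ^ n"]
    show "(E n has_vector_derivative E (Suc n) t) (at t within I)"
      by (simp add: E_def o_def mult.commute)
  qed
  have E0: "\<forall>t\<in>I. E 0 t = \<sigma> (?A t)" using D0 sub by (simp add: E_def)
  have E1: "\<forall>t\<in>I. E 1 t \<noteq> 0" using D1 sub d by (simp add: E_def)
  show ?thesis by (rule good_intro[OF TE E0 nbI E1])
qed

lemma chart:
  assumes hom: "homeomorphism K c \<sigma> \<sigma>'" and sub: "\<psi> ` I \<subseteq> K"
    and op: "openin (top_of_set K) (\<psi> ` I)" and homp: "homeomorphism I (\<psi> ` I) \<psi> \<psi>'"
    and I0: "0 \<in> I" and G: "good I (\<sigma> \<circ> \<psi>)"
  shows "\<exists>U. open U \<and> \<sigma> (\<psi> 0) \<in> U \<and> smooth_embedding I (\<sigma> \<circ> \<psi>) \<and> (\<sigma> \<circ> \<psi>) ` I = c \<inter> U"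
proof -
  have h2: "homeomorphism (\<psi> ` I) (\<sigma> ` \<psi> ` I) \<sigma> \<sigma>'"
    by (rule homeomorphism_of_subsets[OF hom sub]) (use hom sub in \<open>auto simp: homeomorphism_def\<close>)
  have h3: "homeomorphism I ((\<sigma> \<circ> \<psi>) ` I) (\<sigma> \<circ> \<psi>) (\<psi>' \<circ> \<sigma>')"
    using homeomorphism_compose[OF homp h2] by (simp add: image_comp)
  have inj: "inj_on (\<sigma> \<circ> \<psi>) I"
    using h3 unfolding homeomorphism_def by (metis inj_on_inverseI)
  have "openin (top_of_set c) (\<sigma> ` (\<psi> ` I))"
    by (rule homeomorphism_imp_open_map[OF hom op])
  then obtain U where U: "open U" "\<sigma> ` \<psi> ` I = c \<inter> U" unfolding openin_open by blast
  have "\<sigma> (\<psi> 0) \<in> U" using U I0 by blast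
  moreover have "smooth_embedding I (\<sigma> \<circ> \<psi>)"
    unfolding smooth_embedding_def using G h3 inj unfolding good_def by blast
  ultimately show ?thesis using U by (metis image_comp)
qed



lemma sq_bound:
  fixes u v :: complex
  assumes "norm (u - v) \<le> norm (u + v)"
  shows "norm (u - v) ^ 2 \<le> norm (u ^ 2 - v ^ 2)"
proof -
  have "norm (u - v) ^ 2 = norm (u - v) * norm (u - v)" by (simp add: power2_eq_square)
  also have "\<dots> \<le> norm (u - v) * norm (u + v)" using assms by (simp add: mult_left_mono)
  also have "\<dots> = norm ((u - v) * (u + v))" by (simp add: norm_mult)
  also have "(u - v) * (u + v) = u ^ 2 - v ^ 2" by (simp add: algebra_simps power2_eq_square)
  finally show ?thesis .
qed

lemma good_cont: "good I g \<Longrightarrow> continuous_on I g"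
  unfolding good_def smooth_on_tower
  by (metis continuous_on_cong tower_cont)

lemma fold_homeo:
  fixes z w :: "real \<Rightarrow> complex"
  assumes e: "\<epsilon> > 0"
    and hom: "homeomorphism {-\<epsilon><..<\<epsilon>} ((\<lambda>x. (z x, w x)) ` {-\<epsilon><..<\<epsilon>}) (\<lambda>x. (z x, w x)) h"
    and eq: "\<forall>x\<in>{-\<epsilon><..<\<epsilon>}. z x ^ 2 = poly f (w x)"
    and sym: "\<forall>x\<in>{-\<epsilon><..<\<epsilon>}. z (- x) = - z x \<and> w (- x) = w x"
    and cont: "continuous_on {0..<\<epsilon>\<^sup>2} (\<lambda>x. w (sqrt x))"
    and inj: "inj_on (\<lambda>x. w (sqrt x)) {0..<\<epsilon>\<^sup>2}"
  shows "\<exists>g. homeomorphism {0..<\<epsilon>\<^sup>2} ((\<lambda>x. w (sqrt x)) ` {0..<\<epsilon>\<^sup>2}) (\<lambda>x. w (sqrt x)) g"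
proof -
  let ?J = "{-\<epsilon><..<\<epsilon>}"
  let ?S = "{0..<\<epsilon>\<^sup>2}"
  let ?\<eta> = "\<lambda>x. w (sqrt x)"
  let ?\<alpha> = "\<lambda>x. (z x, w x)"
  define g where "g = inv_into ?S ?\<eta>"
  have sqJ: "sqrt x \<in> ?J" if "x \<in> ?S" for x
  proof -
    have "sqrt x < \<epsilon>" using that e real_sqrt_less_mono[of x "\<epsilon>^2"] by simp
    moreover have "0 \<le> sqrt x" using that by simp
    ultimately show ?thesis using e unfolding greaterThanLessThan_iff by linarith
  qed
  have hcont: "continuous_on (?\<alpha> ` ?J) h" using hom unfolding homeomorphism_def by blast
  have hinv: "h (?\<alpha> x) = x" if "x \<in> ?J" for x using hom that unfolding homeomorphism_def by blast
  have gcont: "continuous_on (?\<eta> ` ?S) g"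
  proof (rule continuous_on_sequentiallyI)
    fix u a assume u: "\<forall>n. u n \<in> ?\<eta> ` ?S" and a: "a \<in> ?\<eta> ` ?S" and ua: "u \<longlonglongrightarrow> a"
    define x where "x = (\<lambda>n. g (u n))"
    define xa where "xa = g a"
    have xS: "x n \<in> ?S" for n unfolding x_def g_def by (rule inv_into_into) (use u in blast)
    have xaS: "xa \<in> ?S" unfolding xa_def g_def by (rule inv_into_into) (use a in blast)
    have ux: "u n = ?\<eta> (x n)" for n unfolding x_def g_def by (rule f_inv_into_f[symmetric]) (use u in blast)
    have ax: "a = ?\<eta> xa" unfolding xa_def g_def by (rule f_inv_into_f[symmetric]) (use a in blast)
    define s where "s = (\<lambda>n. sqrt (x n))"
    define sa where "sa = sqrt xa"
    define t where "t = (\<lambda>n. if norm (z (s n) - z sa) \<le> norm (z (s n) + z sa) then s n else - s n)"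
    have sJ: "s n \<in> ?J" for n using sqJ[OF xS] by (simp add: s_def)
    have saJ: "sa \<in> ?J" using sqJ[OF xaS] by (simp add: sa_def)
    have tJ: "t n \<in> ?J" for n using sJ[of n] by (auto simp: t_def)
    have wt: "w (t n) = u n" for n using sym sJ[of n] ux[of n] by (auto simp: t_def s_def)
    have abst: "\<bar>t n\<bar> = s n" for n using xS[of n] by (auto simp: t_def s_def)
    have bound: "norm (z (t n) - z sa) \<le> sqrt (norm (poly f (u n) - poly f a))" for n
    proof -
      have le: "norm (z (t n) - z sa) \<le> norm (z (t n) + z sa)"
      proof (cases "norm (z (s n) - z sa) \<le> norm (z (s n) + z sa)")
        case True thus ?thesis by (simp add: t_def)
      next
        case False
        have "z (t n) = - z (s n)" using False sym sJ[of n] by (simp add: t_def)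
        moreover have "norm (- z (s n) - z sa) = norm (z (s n) + z sa)"
        proof - have "- z (s n) - z sa = -(z (s n) + z sa)" by simp thus ?thesis by (simp only: norm_minus_cancel) qed
        moreover have "norm (- z (s n) + z sa) = norm (z (s n) - z sa)"
        proof - have "- z (s n) + z sa = -(z (s n) - z sa)" by simp thus ?thesis by (simp only: norm_minus_cancel) qed
        ultimately show ?thesis using False by simp
      qed
      have "norm (z (t n) - z sa) ^ 2 \<le> norm (z (t n) ^ 2 - z sa ^ 2)" by (rule sq_bound[OF le])
      also have "z (t n) ^ 2 = poly f (u n)" using eq tJ[of n] wt[of n] by metis
      also have "z sa ^ 2 = poly f a" using eq saJ ax by (simp add: sa_def)
      finally show ?thesis by (simp add: real_le_rsqrt)
    qed
    have "((\<lambda>n. poly f (u n)) \<longlonglongrightarrow> poly f a)" by (intro tendsto_intros ua)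
    hence "((\<lambda>n. poly f (u n) - poly f a) \<longlonglongrightarrow> 0)" by (rule LIM_zero)
    hence "((\<lambda>n. sqrt (norm (poly f (u n) - poly f a))) \<longlonglongrightarrow> 0)"
      using tendsto_real_sqrt[OF tendsto_norm_zero] by fastforce
    hence "((\<lambda>n. z (t n) - z sa) \<longlonglongrightarrow> 0)"
      by (rule Lim_null_comparison[rotated]) (use bound in auto)
    hence zt: "(\<lambda>n. z (t n)) \<longlonglongrightarrow> z sa" by (simp add: LIM_zero_iff)
    have wsa: "w sa = a" using ax by (simp add: sa_def)
    have "(\<lambda>n. ?\<alpha> (t n)) \<longlonglongrightarrow> ?\<alpha> sa"
      using tendsto_Pair[OF zt ua] by (simp add: wt wsa)
    hence "(\<lambda>n. h (?\<alpha> (t n))) \<longlonglongrightarrow> h (?\<alpha> sa)"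
      by (rule continuous_on_tendsto_compose[OF hcont]) (use saJ tJ in auto)
    hence "t \<longlonglongrightarrow> sa" using hinv tJ saJ by simp
    hence "(\<lambda>n. \<bar>t n\<bar>) \<longlonglongrightarrow> \<bar>sa\<bar>" by (rule tendsto_rabs)
    hence "s \<longlonglongrightarrow> sa" using abst xaS by (simp add: sa_def)
    hence "(\<lambda>n. (s n)^2) \<longlonglongrightarrow> sa ^ 2" by (intro tendsto_intros)
    moreover have "(s n)^2 = x n" for n using xS[of n] by (simp add: s_def)
    moreover have "sa ^ 2 = xa" using xaS by (simp add: sa_def)
    ultimately show "(\<lambda>n. g (u n)) \<longlonglongrightarrow> g a" by (simp add: x_def xa_def)
  qed
  have "homeomorphism ?S (?\<eta> ` ?S) ?\<eta> g"
  proof (rule homeomorphismI[OF cont gcont])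
    show "?\<eta> ` ?S \<subseteq> ?\<eta> ` ?S" by simp
    show "g ` ?\<eta> ` ?S \<subseteq> ?S"
    proof
      fix y assume "y \<in> g ` ?\<eta> ` ?S"
      then obtain x where x: "x \<in> ?S" "y = g (?\<eta> x)" by blast
      thus "y \<in> ?S" using inv_into_f_f[OF inj x(1)] by (simp add: g_def)
    qed
    show "g (?\<eta> x) = x" if "x \<in> ?S" for x using inv_into_f_f[OF inj that] by (simp add: g_def)
    show "?\<eta> (g y) = y" if "y \<in> ?\<eta> ` ?S" for y unfolding g_def by (rule f_inv_into_f) (use that in blast)
  qed
  thus ?thesis by blast
qed

lemma aff_hom:
  assumes "\<delta> > 0"
  shows "homeomorphism I ((\<lambda>t. x0 + \<delta> * t) ` I) (\<lambda>t. x0 + \<delta> * (t::real)) (\<lambda>y. (y - x0) / \<delta>)"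
  by (rule homeomorphismI) (use assms in \<open>auto intro!: continuous_intros\<close>)

lemma chart_gen:
  assumes hom: "homeomorphism K c \<sigma> \<sigma>'" and img: "\<psi> ` I = K \<inter> V" and V: "open V"
    and homp: "homeomorphism I (\<psi> ` I) \<psi> \<psi>'"
    and I0: "0 \<in> I" and G: "good I (\<lambda>t. \<sigma> (\<psi> t))"
  shows "\<exists>U \<phi>. open U \<and> \<sigma> (\<psi> 0) \<in> U \<and> \<phi> 0 = \<sigma> (\<psi> 0) \<and> smooth_embedding I \<phi> \<and> \<phi> ` I = c \<inter> U"
proof -
  have op: "openin (top_of_set K) (\<psi> ` I)" unfolding openin_open using img V by blast
  have "\<exists>U. open U \<and> \<sigma> (\<psi> 0) \<in> U \<and> smooth_embedding I (\<sigma> \<circ> \<psi>) \<and> (\<sigma> \<circ> \<psi>) ` I = c \<inter> U"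
    by (rule chart[OF hom _ op homp I0]) (use img G in \<open>auto simp: o_def\<close>)
  thus ?thesis by (metis comp_apply)
qed

lemma chart_aff:
  assumes hom: "homeomorphism K c \<sigma> \<sigma>'" and d: "\<delta> > 0"
    and img: "(\<lambda>t. x0 + \<delta> * t) ` I = K \<inter> V" and V: "open V"
    and I0: "0 \<in> I" and G: "good I (\<lambda>t. \<sigma> (x0 + \<delta> * t))"
  shows "\<exists>U \<phi>. open U \<and> \<sigma> x0 \<in> U \<and> \<phi> 0 = \<sigma> x0 \<and> smooth_embedding I \<phi> \<and> \<phi> ` I = c \<inter> U"
  using chart_gen[OF hom img V aff_hom[OF d] I0 G] by simp

lemma img_Ioo: "\<delta> > 0 \<Longrightarrow> (\<lambda>t. x0 + \<delta> * t) ` {-1<..<1} = {x0 - \<delta><..<x0 + (\<delta>::real)}"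
proof (intro equalityI subsetI)
  fix y assume d: "\<delta> > 0" and y: "y \<in> {x0 - \<delta><..<x0 + \<delta>}"
  have "(y - x0) / \<delta> \<in> {-1<..<1}" using d y by (auto simp: field_simps)
  moreover have "y = x0 + \<delta> * ((y - x0) / \<delta>)" using d by simp
  ultimately show "y \<in> (\<lambda>t. x0 + \<delta> * t) ` {-1<..<1}" by blast
next
  fix y assume d: "\<delta> > 0" and y: "y \<in> (\<lambda>t. x0 + \<delta> * t) ` {-1<..<1}"
  then obtain t where t: "-1 < t" "t < 1" "y = x0 + \<delta> * t" by auto
  have "\<delta> * (-1) < \<delta> * t" "\<delta> * t < \<delta> * 1" using t d by (intro mult_strict_left_mono; simp)+
  thus "y \<in> {x0 - \<delta><..<x0 + \<delta>}" using t by simp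
qed

lemma img_Ico: "\<delta> > 0 \<Longrightarrow> (\<lambda>t. x0 + \<delta> * t) ` {0..<1} = {x0..<x0 + (\<delta>::real)}"
proof (intro equalityI subsetI)
  fix y assume d: "\<delta> > 0" and y: "y \<in> {x0..<x0 + \<delta>}"
  have "(y - x0) / \<delta> \<in> {0..<1}" using d y by (auto simp: field_simps)
  moreover have "y = x0 + \<delta> * ((y - x0) / \<delta>)" using d by simp
  ultimately show "y \<in> (\<lambda>t. x0 + \<delta> * t) ` {0..<1}" by blast
next
  fix y assume d: "\<delta> > 0" and y: "y \<in> (\<lambda>t. x0 + \<delta> * t) ` {0..<1}"
  then obtain t where t: "0 \<le> t" "t < 1" "y = x0 + \<delta> * t" by auto
  have "\<delta> * 0 \<le> \<delta> * t" "\<delta> * t < \<delta> * 1" using t d by (intro mult_left_mono mult_strict_left_mono; simp)+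
  thus "y \<in> {x0..<x0 + \<delta>}" using t by simp
qed

lemma rc_intro:
  assumes "B \<subseteq> c"
    and "\<forall>p\<in>c. \<exists>U \<phi>. open U \<and> p \<in> U \<and> \<phi> 0 = p \<and>
        smooth_embedding (if p \<in> B then {0..<1} else {-1<..<1}) \<phi> \<and>
        \<phi> ` (if p \<in> B then {0..<1} else {-1<..<1}) = c \<inter> U"
  shows "regular_curve_with_boundary c B"
  using assms unfolding regular_curve_with_boundary_def Let_def by blast

lemma tower_fst: "tower J D \<Longrightarrow> tower J (\<lambda>n t. fst (D n t))"
  unfolding tower_def by (blast intro: bounded_linear.has_vector_derivative[OF bounded_linear_fst])

lemma tower_snd: "tower J D \<Longrightarrow> tower J (\<lambda>n t. snd (D n t))"
  unfolding tower_def by (blast intro: bounded_linear.has_vector_derivative[OF bounded_linear_snd])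

lemma tower_subset: "tower I D \<Longrightarrow> J \<subseteq> I \<Longrightarrow> tower J D"
  unfolding tower_def by (blast intro: has_vector_derivative_within_subset)

lemma tower_vd:
  assumes T: "tower I D" and g: "\<forall>x\<in>I. D 0 x = g x" and x: "x \<in> I" and nb: "at x within I \<noteq> bot"
  shows "D 1 x = vector_derivative g (at x within I)"
proof -
  have "(D 0 has_vector_derivative D 1 x) (at x within I)" using T x unfolding tower_def by simp
  hence "(g has_vector_derivative D 1 x) (at x within I)"
    by (rule has_vector_derivative_transform[OF x, rotated]) (use g in auto)
  from vector_derivative_within[OF nb this] show ?thesis by simp
qed



lemma notmult:
  assumes "of_int n * pi < t" "t < of_int (n+1) * pi"
  shows "t \<noteq> of_int k * pi"
proof
  assume t: "t = of_int k * pi"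
  have "of_int n < (of_int k :: real)" using assms(1) t by (simp add: mult_less_cancel_right_pos)
  moreover have "of_int k < (of_int (n+1) :: real)" using assms(2) t by (simp only: mult_less_cancel_right_pos pi_gt_zero)
  ultimately have "n < k" "k < n + 1" by linarith+
  thus False by linarith
qed

lemma per_int:
  assumes per: "\<forall>u. g (u + p) = g u"
  shows "g (u + of_int k * p) = g u"
proof -
  have pn: "g (v + of_nat n * p) = g v" for v n
  proof (induction n)
    case (Suc n)
    have "g (v + of_nat (Suc n) * p) = g ((v + of_nat n * p) + p)" by (simp add: algebra_simps)
    also have "\<dots> = g (v + of_nat n * p)" using per by blast
    finally show ?case using Suc by simp
  qed simp
  show ?thesis
  proof (cases "k \<ge> 0")
    case True
    then obtain n where "k = int n" using nonneg_int_cases by blast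
    thus ?thesis using pn by simp
  next
    case False
    have "k = - int (nat (-k))" using False by simp
    then obtain n where k: "k = - int n" by blast
    have "g (u - of_nat n * p) = g (u - of_nat n * p + of_nat n * p)" using pn[of "u - of_nat n * p" n] by simp
    thus ?thesis using k by simp
  qed
qed

lemma tower_translate: "tower UNIV D \<Longrightarrow> tower UNIV (\<lambda>n t. D n (c + t))"
  unfolding tower_def
proof (intro allI ballI)
  fix n and t :: real assume T: "\<forall>n. \<forall>x\<in>UNIV. (D n has_vector_derivative D (Suc n) x) (at x within UNIV)"
  have d1: "((\<lambda>t. c + t) has_vector_derivative 1) (at t)" by (auto intro!: derivative_eq_intros)
  from vector_diff_chain_at[OF d1, of "D n"] T
  show "((\<lambda>t. D n (c + t)) has_vector_derivative D (Suc n) (c + t)) (at t within UNIV)"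
    by (simp add: o_def)
qed



lemma part_a:
  fixes f :: "complex poly" and z w :: "real \<Rightarrow> complex" and \<epsilon> :: real
  assumes e: "0 < \<epsilon>" and emb: "smooth_embedding {-\<epsilon><..<\<epsilon>} (\<lambda>x. (z x, w x))"
    and M: "\<forall>x\<in>{-\<epsilon><..<\<epsilon>}. (z x, w x) \<in> M1 f" and z0: "z 0 = 0"
    and znz: "\<forall>x\<in>{-\<epsilon><..<\<epsilon>}. x \<noteq> 0 \<longrightarrow> z x \<noteq> 0"
    and sym: "\<forall>x\<in>{-\<epsilon><..<\<epsilon>}. z (- x) = - z x \<and> w (- x) = w x"
  shows "let c = w ` {-\<epsilon><..<\<epsilon>}; \<eta> = (\<lambda>x. w (sqrt x)) in
                 smooth_embedding {0..<\<epsilon>\<^sup>2} \<eta> \<and> \<eta> ` {0..<\<epsilon>\<^sup>2} = c \<and>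
                 regular_curve_with_boundary c {w 0}"
proof -
  let ?J = "{-\<epsilon><..<\<epsilon>}"
  let ?S = "{0..<\<epsilon>\<^sup>2}"
  let ?\<eta> = "\<lambda>x. w (sqrt x)"
  let ?\<alpha> = "\<lambda>x. (z x, w x)"
  let ?c = "w ` ?J"
  have e2: "0 < \<epsilon>\<^sup>2" using e by simp
  have sqJ: "sqrt x \<in> ?J" if "x \<in> ?S" for x
  proof -
    have "sqrt x < \<epsilon>" using that e real_sqrt_less_mono[of x "\<epsilon>^2"] by simp
    moreover have "0 \<le> sqrt x" using that by simp
    ultimately show ?thesis using e unfolding greaterThanLessThan_iff by linarith
  qed
  from emb obtain h where sm: "smooth_on ?J ?\<alpha>" and vd: "\<forall>x\<in>?J. vector_derivative ?\<alpha> (at x within ?J) \<noteq> 0"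
    and injA: "inj_on ?\<alpha> ?J" and homA: "homeomorphism ?J (?\<alpha> ` ?J) ?\<alpha> h"
    unfolding smooth_embedding_def by blast
  from sm obtain D where TD: "tower ?J D" and D0: "\<forall>x\<in>?J. D 0 x = ?\<alpha> x"
    unfolding smooth_on_tower by blast
  have D1: "D 1 x \<noteq> 0" if "x \<in> ?J" for x
    using tower_vd[OF TD D0 that ntriv_Ioo[OF that]] vd that by simp
  have eq: "\<forall>x\<in>?J. z x ^ 2 = poly f (w x)" using M by (simp add: M1_def)
  have good: "good ?S ?\<eta>"
  proof (rule local_model[OF e tower_fst[OF TD] tower_snd[OF TD]])
    show "\<forall>s\<in>?J. fst (D 0 s) ^ 2 = poly f (snd (D 0 s))" using eq D0 by simp
    show "fst (D 0 0) = 0" using D0 z0 e by simp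
    show "\<forall>t\<in>?J. t \<noteq> 0 \<longrightarrow> fst (D 0 t) \<noteq> 0" using D0 znz by simp
    show "\<forall>t\<in>?J. snd (D 0 (-t)) = snd (D 0 t)"
    proof
      fix t assume t: "t \<in> ?J"
      hence "-t \<in> ?J" by auto
      thus "snd (D 0 (-t)) = snd (D 0 t)" using D0 t sym by simp
    qed
    show "\<forall>t\<in>?J. fst (D 1 t) \<noteq> 0 \<or> snd (D 1 t) \<noteq> 0"
      using D1 by (metis prod.collapse zero_prod_def)
    show "\<forall>t\<in>?J. snd (D 0 t) = w t" using D0 by simp
  qed
  have img: "?\<eta> ` ?S = ?c"
  proof
    show "?\<eta> ` ?S \<subseteq> ?c" using sqJ by auto
    show "?c \<subseteq> ?\<eta> ` ?S"
    proof
      fix p assume "p \<in> ?c"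
      then obtain t where t: "t \<in> ?J" "p = w t" by blast
      have "w \<bar>t\<bar> = w t" using sym t by (cases "t \<ge> 0") auto
      have "\<bar>t\<bar> < \<epsilon>" using t by auto
      hence "\<bar>t\<bar>^2 < \<epsilon>^2" by (intro power_strict_mono) auto
      hence "t^2 \<in> ?S" by simp
      moreover have "?\<eta> (t^2) = p" using t \<open>w \<bar>t\<bar> = w t\<close> by simp
      ultimately show "p \<in> ?\<eta> ` ?S" by (metis image_eqI)
    qed
  qed
  have inj: "inj_on ?\<eta> ?S"
  proof (rule inj_onI)
    fix x y assume x: "x \<in> ?S" and y: "y \<in> ?S" and xy: "?\<eta> x = ?\<eta> y"
    let ?s = "sqrt x" and ?t = "sqrt y"
    have sJ: "?s \<in> ?J" and tJ: "?t \<in> ?J" using sqJ x y by auto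
    have mtJ: "- ?t \<in> ?J" using tJ by auto
    have "z ?s ^ 2 = z ?t ^ 2" using eq sJ tJ xy by metis
    hence "z ?s = z ?t \<or> z ?s = - z ?t" by (simp add: power2_eq_iff)
    hence "?s = ?t"
    proof
      assume "z ?s = z ?t"
      hence "?\<alpha> ?s = ?\<alpha> ?t" using xy by simp
      thus "?s = ?t" using injA sJ tJ unfolding inj_on_def by blast
    next
      assume "z ?s = - z ?t"
      hence "?\<alpha> ?s = ?\<alpha> (- ?t)" using xy sym tJ by simp
      hence "?s = - ?t" using injA sJ mtJ unfolding inj_on_def by blast
      moreover have "0 \<le> ?s" "0 \<le> ?t" using x y by auto
      ultimately show "?s = ?t" by linarith
    qed
    thus "x = y" using x y by simp
  qed
  obtain g where homE: "homeomorphism ?S (?\<eta> ` ?S) ?\<eta> g"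
    using fold_homeo[OF e homA eq sym good_cont[OF good] inj] by blast
  have emb\<eta>: "smooth_embedding ?S ?\<eta>"
    unfolding smooth_embedding_def using good inj homE unfolding good_def by blast
  have homc: "homeomorphism ?S ?c ?\<eta> g" using homE img by simp
  have nbS: "\<forall>x\<in>?S. at x within ?S \<noteq> bot" using ntriv_Ico[OF e2] by blast
  have rc: "regular_curve_with_boundary ?c {w 0}"
  proof (rule rc_intro)
    show "{w 0} \<subseteq> ?c" using e by auto
    show "\<forall>p\<in>?c. \<exists>U \<phi>. open U \<and> p \<in> U \<and> \<phi> 0 = p \<and>
        smooth_embedding (if p \<in> {w 0} then {0..<1} else {-1<..<1}) \<phi> \<and>
        \<phi> ` (if p \<in> {w 0} then {0..<1} else {-1<..<1}) = ?c \<inter> U"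
    proof
      fix p assume "p \<in> ?c"
      then obtain x0 where x0: "x0 \<in> ?S" "p = ?\<eta> x0" using img by blast
      show "\<exists>U \<phi>. open U \<and> p \<in> U \<and> \<phi> 0 = p \<and>
        smooth_embedding (if p \<in> {w 0} then {0..<1} else {-1<..<1}) \<phi> \<and>
        \<phi> ` (if p \<in> {w 0} then {0..<1} else {-1<..<1}) = ?c \<inter> U"
      proof (cases "x0 = 0")
        case True
        have pB: "p \<in> {w 0}" using True x0 by simp
        have im: "(\<lambda>t. 0 + \<epsilon>\<^sup>2 * t) ` {0..<1} = ?S \<inter> UNIV" using img_Ico[OF e2, of 0] by simp
        have sub: "\<forall>t\<in>{0..<1}. 0 + \<epsilon>\<^sup>2 * t \<in> ?S" using im by blast
        have G: "good {0..<1} (\<lambda>t. ?\<eta> (0 + \<epsilon>\<^sup>2 * t))"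
          by (rule good_affine[OF good nbS e2 sub]) (use ntriv_Ico[of 0 1] in auto)
        from chart_aff[OF homc e2 im open_UNIV _ G] True x0 pB show ?thesis by simp
      next
        case False
        hence xp: "x0 > 0" using x0 by auto
        define \<delta> where "\<delta> = min x0 (\<epsilon>\<^sup>2 - x0)"
        have d: "\<delta> > 0" using xp x0 by (auto simp: \<delta>_def)
        have VS: "{x0 - \<delta><..<x0 + \<delta>} \<subseteq> ?S" by (auto simp: \<delta>_def)
        have im: "(\<lambda>t. x0 + \<delta> * t) ` {-1<..<1} = ?S \<inter> {x0 - \<delta><..<x0 + \<delta>}"
          using img_Ioo[OF d, of x0] VS by blast
        have sub: "\<forall>t\<in>{-1<..<1}. x0 + \<delta> * t \<in> ?S" using im by blast
        have G: "good {-1<..<1} (\<lambda>t. ?\<eta> (x0 + \<delta> * t))"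
          by (rule good_affine[OF good nbS d sub]) (use ntriv_Ioo in auto)
        have pB: "p \<notin> {w 0}"
        proof
          assume "p \<in> {w 0}"
          hence "?\<eta> x0 = ?\<eta> 0" using x0 by simp
          moreover have "(0::real) \<in> ?S" using e2 by simp
          ultimately have "x0 = 0" using inj_onD[OF inj _ x0(1)] by blast
          thus False using False by simp
        qed
        from chart_aff[OF homc d im open_greaterThanLessThan _ G] x0 pB show ?thesis by simp
      qed
    qed
  qed
  show ?thesis unfolding Let_def using emb\<eta> img rc by blast
qed



lemma sqrt_chart_hom:
  assumes d: "\<delta> > 0"
  shows "homeomorphism {0..<1} ((\<lambda>t. sqrt (0 + \<delta> * t)) ` {0..<1}) (\<lambda>t. sqrt (0 + \<delta> * t)) (\<lambda>y. y^2 / \<delta>)"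
proof (rule homeomorphismI)
  show "continuous_on {0..<1} (\<lambda>t. sqrt (0 + \<delta> * t))" by (intro continuous_intros)
  show "continuous_on ((\<lambda>t. sqrt (0 + \<delta> * t)) ` {0..<1}) (\<lambda>y. y^2 / \<delta>)" using d by (intro continuous_intros) auto
  show "(\<lambda>t. sqrt (0 + \<delta> * t)) ` {0..<1} \<subseteq> (\<lambda>t. sqrt (0 + \<delta> * t)) ` {0..<1}" by simp
  show "(\<lambda>y. y\<^sup>2 / \<delta>) ` (\<lambda>t. sqrt (0 + \<delta> * t)) ` {0..<1} \<subseteq> {0..<1}" using d by auto
  show "sqrt (0 + \<delta> * t) ^ 2 / \<delta> = t" if "t \<in> {0..<1}" for t using d that by simp
  show "sqrt (0 + \<delta> * (y^2/\<delta>)) = y" if "y \<in> (\<lambda>t. sqrt (0 + \<delta> * t)) ` {0..<1}" for y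
    using d that by auto
qed

lemma sqrt_chart_img:
  assumes b: "b > 0"
  shows "(\<lambda>t. sqrt (0 + b^2 * t)) ` {0..<1} = {0..<b}"
proof (intro equalityI subsetI)
  fix y assume "y \<in> (\<lambda>t. sqrt (0 + b^2 * t)) ` {0..<1}"
  then obtain t where t: "0 \<le> t" "t < 1" "y = sqrt (b^2 * t)" by auto
  have "b^2 * t < b^2 * 1" using t b by (intro mult_strict_left_mono) auto
  hence "sqrt (b^2 * t) < sqrt (b^2)" by (simp only: real_sqrt_less_iff)
  thus "y \<in> {0..<b}" using t b by simp
next
  fix y assume y: "y \<in> {0..<b}"
  have "y^2 < b^2" using y by (intro power_strict_mono) auto
  hence "y^2 / b^2 \<in> {0..<1}" using b by auto
  moreover have "sqrt (0 + b^2 * (y^2 / b^2)) = y" using b y by simp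
  ultimately show "y \<in> (\<lambda>t. sqrt (0 + b^2 * t)) ` {0..<1}" by (metis image_eqI)
qed

lemma refl_chart_hom:
  assumes d: "\<delta> > 0"
  shows "homeomorphism {0..<1} ((\<lambda>t. c - sqrt (0 + \<delta> * t)) ` {0..<1}) (\<lambda>t. c - sqrt (0 + \<delta> * t)) (\<lambda>y. (c - y)^2 / \<delta>)"
proof (rule homeomorphismI)
  show "continuous_on {0..<1} (\<lambda>t. c - sqrt (0 + \<delta> * t))" by (intro continuous_intros)
  show "continuous_on ((\<lambda>t. c - sqrt (0 + \<delta> * t)) ` {0..<1}) (\<lambda>y. (c - y)^2 / \<delta>)" using d by (intro continuous_intros) auto
  show "(\<lambda>t. c - sqrt (0 + \<delta> * t)) ` {0..<1} \<subseteq> (\<lambda>t. c - sqrt (0 + \<delta> * t)) ` {0..<1}" by simp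
  show "(\<lambda>y. (c - y)\<^sup>2 / \<delta>) ` (\<lambda>t. c - sqrt (0 + \<delta> * t)) ` {0..<1} \<subseteq> {0..<1}" using d by auto
  show "(c - (c - sqrt (0 + \<delta> * t))) ^ 2 / \<delta> = t" if "t \<in> {0..<1}" for t using d that by simp
  show "c - sqrt (0 + \<delta> * ((c - y)^2/\<delta>)) = y" if "y \<in> (\<lambda>t. c - sqrt (0 + \<delta> * t)) ` {0..<1}" for y
    using d that by auto
qed

lemma part_b:
  fixes f :: "complex poly" and z w :: "real \<Rightarrow> complex"
  assumes SC: "symmetric_circle f z w"
  shows "regular_curve_with_boundary (range w) {w 0, w pi}"
proof -
  let ?\<alpha> = "\<lambda>u. (z u, w u)"
  let ?K = "{0..pi}"
  from SC have per: "\<forall>u. z (u + 2 * pi) = z u \<and> w (u + 2 * pi) = w u"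
    and sm: "smooth_on UNIV ?\<alpha>" and vd: "\<forall>u. vector_derivative ?\<alpha> (at u) \<noteq> 0"
    and injA: "inj_on ?\<alpha> {0..<2 * pi}" and M: "\<forall>u. ?\<alpha> u \<in> M1 f"
    and sym: "\<forall>u. z (- u) = - z u \<and> w (- u) = w u"
    and znz0: "\<forall>u. (\<forall>k::int. u \<noteq> of_int k * pi) \<longrightarrow> z u \<noteq> 0"
    unfolding symmetric_circle_def by blast+
  from sm obtain D where TD: "tower UNIV D" and D0: "\<forall>x. D 0 x = ?\<alpha> x"
    unfolding smooth_on_tower by blast
  have D1: "D 1 x \<noteq> 0" for x
    using tower_vd[OF TD _ UNIV_I, of ?\<alpha> x] D0 vd by simp
  have nz: "fst (D 1 x) \<noteq> 0 \<or> snd (D 1 x) \<noteq> 0" for x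
    using D1[of x] by (metis prod.collapse zero_prod_def)
  have eq: "z u ^ 2 = poly f (w u)" for u using M by (simp add: M1_def)
  let ?Z = "\<lambda>n t. fst (D n t)" and ?W = "\<lambda>n t. snd (D n t)"
  have TZ: "tower UNIV ?Z" using tower_fst[OF TD] .
  have TW: "tower UNIV ?W" using tower_snd[OF TD] .
  have W0: "?W 0 = w" using D0 by auto
  have Z0: "?Z 0 = z" using D0 by auto
  have wper: "w (u + 2 * pi) = w u" for u using per by blast
  have z0: "z 0 = 0" using sym[rule_format, of 0] by simp
  have zpi: "z pi = 0"
  proof -
    have "z (- pi + 2 * pi) = z (- pi)" using per by blast
    hence "z pi = - z pi" using sym by simp
    thus ?thesis by simp
  qed
  have evpi: "w (pi - t) = w (pi + t)" for t
  proof -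
    have "w (pi - t) = w (- (pi - t))" using sym[rule_format, of "pi - t"] by simp
    also have "\<dots> = w ((t - pi) + 2 * pi)" using wper[of "t - pi"] by simp
    also have "\<dots> = w (pi + t)" by (simp add: algebra_simps)
    finally show ?thesis .
  qed
  have znz: "z t \<noteq> 0" if "of_int n * pi < t" "t < of_int (n+1) * pi" for t n
    using znz0 notmult[OF that] by blast
  have injK: "inj_on w ?K"
  proof (rule inj_onI)
    fix s t assume s: "s \<in> ?K" and t: "t \<in> ?K" and st: "w s = w t"
    have s2: "s \<in> {0..<2*pi}" using s pi_gt_zero unfolding atLeastAtMost_iff atLeastLessThan_iff by linarith
    have t2: "t \<in> {0..<2*pi}" using t pi_gt_zero unfolding atLeastAtMost_iff atLeastLessThan_iff by linarith
    have "z s ^ 2 = z t ^ 2" using eq st by metis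
    hence "z s = z t \<or> z s = - z t" by (simp add: power2_eq_iff)
    thus "s = t"
    proof
      assume "z s = z t"
      thus "s = t" using injA s2 t2 st unfolding inj_on_def by auto
    next
      assume zst: "z s = - z t"
      show "s = t"
      proof (cases "t = 0")
        case True
        hence "z s = z t" using zst z0 by simp
        thus ?thesis using injA s2 t2 st unfolding inj_on_def by auto
      next
        case False
        have t3: "2 * pi - t \<in> {0..<2*pi}" using t False by auto
        have "z (2 * pi - t) = z (- t)" using per[rule_format, of "- t"] by (simp add: algebra_simps)
        hence "z (2 * pi - t) = z s" using zst sym by simp
        moreover have "w (2 * pi - t) = w s"
          using wper[of "- t"] sym st by (simp add: algebra_simps)
        ultimately have "s = 2 * pi - t" using injA s2 t3 unfolding inj_on_def by (metis (no_types, lifting))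
        thus ?thesis using s t by auto
      qed
    qed
  qed
  have rng: "range w = w ` ?K"
  proof
    show "w ` ?K \<subseteq> range w" by auto
    show "range w \<subseteq> w ` ?K"
    proof
      fix p assume "p \<in> range w"
      then obtain u where p: "p = w u" by blast
      define v where "v = u - of_int \<lfloor>u / (2*pi)\<rfloor> * (2*pi)"
      have wv: "w v = w u"
        using per_int[of w "2*pi" v "\<lfloor>u / (2*pi)\<rfloor>"] wper by (simp add: v_def)
      have v0: "0 \<le> v" and v1: "v < 2 * pi"
      proof -
        have "of_int \<lfloor>u / (2*pi)\<rfloor> \<le> u / (2*pi)" by linarith
        hence "of_int \<lfloor>u / (2*pi)\<rfloor> * (2*pi) \<le> u / (2*pi) * (2*pi)"
          by (rule mult_right_mono) simp
        hence "of_int \<lfloor>u / (2*pi)\<rfloor> * (2*pi) \<le> u" by simp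
        thus "0 \<le> v" by (simp add: v_def)
        have "u / (2*pi) < of_int \<lfloor>u / (2*pi)\<rfloor> + 1" by linarith
        hence "u / (2*pi) * (2*pi) < (of_int \<lfloor>u / (2*pi)\<rfloor> + 1) * (2*pi)"
          by (rule mult_strict_right_mono) simp
        hence "u < (of_int \<lfloor>u / (2*pi)\<rfloor> + 1) * (2*pi)" by simp
        thus "v < 2 * pi" by (simp add: v_def algebra_simps)
      qed
      show "p \<in> w ` ?K"
      proof (cases "v \<le> pi")
        case True
        hence "v \<in> ?K" using v0 by simp
        thus ?thesis using wv p by (metis image_eqI)
      next
        case False
        have "w (2 * pi - v) = w (- v)" using wper[of "- v"] by (simp add: algebra_simps)
        hence "w (2 * pi - v) = p" using sym wv p by simp
        moreover have "2 * pi - v \<in> ?K" using False v1 by auto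
        ultimately show ?thesis by (metis image_eqI)
      qed
    qed
  qed
  have contw: "continuous_on UNIV w" using tower_cont[OF TW, of 0] W0 by metis
  obtain w' where hom: "homeomorphism ?K (range w) w w'"
    using homeomorphism_compact[OF compact_Icc continuous_on_subset[OF contw] rng[symmetric] injK] by blast
  have pi2: "0 < pi^2" by simp
  have nb2: "\<forall>x\<in>{0..<pi^2}. at x within {0..<pi^2} \<noteq> bot" using ntriv_Ico[OF pi2] by blast
  define \<delta> where "\<delta> = (pi/2)^2"
  have d: "\<delta> > 0" by (simp add: \<delta>_def)
  have subd: "\<forall>t\<in>{0..<1}. 0 + \<delta> * t \<in> {0..<pi^2}"
  proof
    fix t :: real assume t: "t \<in> {0..<1}"
    have "\<delta> * t \<le> \<delta> * 1" using t d by (intro mult_left_mono) auto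
    thus "0 + \<delta> * t \<in> {0..<pi^2}" using t d by (auto simp: \<delta>_def power2_eq_square)
  qed
  have nbI: "\<forall>t\<in>{0..<1::real}. at t within {0..<1} \<noteq> bot" using ntriv_Ico[of 0 1] by auto
  have simg: "(\<lambda>t. sqrt (0 + \<delta> * t)) ` {0..<1} = {0..<pi/2}"
    using sqrt_chart_img[of "pi/2"] by (simp add: \<delta>_def)
  have good0: "good {0..<pi^2} (\<lambda>x. w (sqrt x))"
  proof (rule local_model[OF pi_gt_zero tower_subset[OF TZ] tower_subset[OF TW]])
    show "\<forall>s\<in>{-pi<..<pi}. fst (D 0 s) ^ 2 = poly f (snd (D 0 s))" using eq D0 by simp
    show "fst (D 0 0) = 0" using D0 z0 by simp
    show "\<forall>t\<in>{-pi<..<pi}. t \<noteq> 0 \<longrightarrow> fst (D 0 t) \<noteq> 0"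
    proof (intro ballI impI)
      fix t assume t: "t \<in> {-pi<..<pi}" "t \<noteq> 0"
      show "fst (D 0 t) \<noteq> 0"
      proof (cases "t > 0")
        case True thus ?thesis using znz[of 0 t] t D0 by simp
      next
        case False thus ?thesis using znz[of "-1" t] t D0 by simp
      qed
    qed
    show "\<forall>t\<in>{-pi<..<pi}. snd (D 0 (-t)) = snd (D 0 t)" using D0 sym by simp
    show "\<forall>t\<in>{-pi<..<pi}. fst (D 1 t) \<noteq> 0 \<or> snd (D 1 t) \<noteq> 0" using nz by blast
    show "\<forall>t\<in>{-pi<..<pi}. snd (D 0 t) = w t" using D0 by simp
  qed auto
  have goodpi: "good {0..<pi^2} (\<lambda>x. w (pi + sqrt x))"
  proof (rule local_model[OF pi_gt_zero tower_subset[OF tower_translate[OF TZ, of pi]] tower_subset[OF tower_translate[OF TW, of pi]]])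
    show "\<forall>s\<in>{-pi<..<pi}. fst (D 0 (pi + s)) ^ 2 = poly f (snd (D 0 (pi + s)))" using eq D0 by simp
    show "fst (D 0 (pi + 0)) = 0" using D0 zpi by simp
    show "\<forall>t\<in>{-pi<..<pi}. t \<noteq> 0 \<longrightarrow> fst (D 0 (pi + t)) \<noteq> 0"
    proof (intro ballI impI)
      fix t assume t: "t \<in> {-pi<..<pi}" "t \<noteq> 0"
      show "fst (D 0 (pi + t)) \<noteq> 0"
      proof (cases "t > 0")
        case True thus ?thesis using znz[of 1 "pi + t"] t D0 by simp
      next
        case False thus ?thesis using znz[of 0 "pi + t"] t D0 by simp
      qed
    qed
    show "\<forall>t\<in>{-pi<..<pi}. snd (D 0 (pi + - t)) = snd (D 0 (pi + t))"
      using D0 evpi by (simp add: algebra_simps)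
    show "\<forall>t\<in>{-pi<..<pi}. fst (D 1 (pi + t)) \<noteq> 0 \<or> snd (D 1 (pi + t)) \<noteq> 0" using nz by blast
    show "\<forall>t\<in>{-pi<..<pi}. snd (D 0 (pi + t)) = w (pi + t)" using D0 by simp
  qed auto
  have goodI: "good {0<..<pi} w"
  proof (rule good_intro[OF tower_subset[OF TW]])
    show "\<forall>x\<in>{0<..<pi}. snd (D 0 x) = w x" using D0 by simp
    show "\<forall>x\<in>{0<..<pi}. at x within {0<..<pi} \<noteq> bot" using ntriv_Ioo by blast
    show "\<forall>x\<in>{0<..<pi}. snd (D 1 x) \<noteq> 0"
    proof
      fix t assume t: "t \<in> {0<..<pi}"
      have "2 * ?Z 0 t * ?Z 1 t = ?W 1 t * poly (pderiv f) (?W 0 t)"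
        using rel1[OF open_UNIV UNIV_I _ tower_open_at[OF TZ open_UNIV UNIV_I, of 0] tower_open_at[OF TW open_UNIV UNIV_I, of 0]] eq D0 by simp
      moreover have "z t \<noteq> 0" using znz[of 0 t] t by simp
      ultimately show "snd (D 1 t) \<noteq> 0" using nz[of t] D0 by auto
    qed
  qed auto
  show ?thesis
  proof (rule rc_intro)
    show "{w 0, w pi} \<subseteq> range w" by auto
    show "\<forall>p\<in>range w. \<exists>U \<phi>. open U \<and> p \<in> U \<and> \<phi> 0 = p \<and>
        smooth_embedding (if p \<in> {w 0, w pi} then {0..<1} else {-1<..<1}) \<phi> \<and>
        \<phi> ` (if p \<in> {w 0, w pi} then {0..<1} else {-1<..<1}) = range w \<inter> U"
    proof
      fix p assume "p \<in> range w"
      then obtain u where u: "u \<in> ?K" "p = w u" using rng by blast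
      show "\<exists>U \<phi>. open U \<and> p \<in> U \<and> \<phi> 0 = p \<and>
        smooth_embedding (if p \<in> {w 0, w pi} then {0..<1} else {-1<..<1}) \<phi> \<and>
        \<phi> ` (if p \<in> {w 0, w pi} then {0..<1} else {-1<..<1}) = range w \<inter> U"
      proof (cases "u = 0")
        case True
        have pB: "p \<in> {w 0, w pi}" using True u by simp
        have G: "good {0..<1} (\<lambda>t. w (sqrt (0 + \<delta> * t)))"
          using good_affine[OF good0 nb2 d subd nbI] by simp
        have im: "(\<lambda>t. sqrt (0 + \<delta> * t)) ` {0..<1} = ?K \<inter> {-1<..<pi/2}"
          using simg pi_gt_zero by auto
        from chart_gen[OF hom im open_greaterThanLessThan sqrt_chart_hom[OF d] _ G] True u pB
        show ?thesis by simp
      next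
        case False
        show ?thesis
        proof (cases "u = pi")
          case True
          have pB: "p \<in> {w 0, w pi}" using True u by simp
          have G0: "good {0..<1} (\<lambda>t. w (pi + sqrt (0 + \<delta> * t)))"
            using good_affine[OF goodpi nb2 d subd nbI] by simp
          have "(\<lambda>t. w (pi + sqrt (0 + \<delta> * t))) = (\<lambda>t. w (pi - sqrt (0 + \<delta> * t)))"
            using evpi by simp
          hence G: "good {0..<1} (\<lambda>t. w (pi - sqrt (0 + \<delta> * t)))" using G0 by simp
          have im: "(\<lambda>t. pi - sqrt (0 + \<delta> * t)) ` {0..<1} = ?K \<inter> {pi/2<..<pi+1}"
          proof -
            have "(\<lambda>t. pi - sqrt (0 + \<delta> * t)) ` {0..<1} = (\<lambda>y. pi - y) ` (\<lambda>t. sqrt (0 + \<delta> * t)) ` {0..<1}"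
              by (simp add: image_comp o_def)
            also have "\<dots> = (\<lambda>y. pi - y) ` {0..<pi/2}" using simg by simp
            also have "\<dots> = ?K \<inter> {pi/2<..<pi+1}"
            proof (intro equalityI subsetI)
              fix x assume "x \<in> (\<lambda>y. pi - y) ` {0..<pi/2}" thus "x \<in> ?K \<inter> {pi/2<..<pi+1}" by auto
            next
              fix x assume x: "x \<in> ?K \<inter> {pi/2<..<pi+1}"
              hence "pi - x \<in> {0..<pi/2}" by auto
              moreover have "x = pi - (pi - x)" by simp
              ultimately show "x \<in> (\<lambda>y. pi - y) ` {0..<pi/2}" by blast
            qed
            finally show ?thesis .
          qed
          from chart_gen[OF hom im open_greaterThanLessThan refl_chart_hom[OF d] _ G] True u pB
          show ?thesis by simp
        next
          case False2: False
          have up: "0 < u" "u < pi" using u False False2 by auto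
          define \<delta>' where "\<delta>' = min u (pi - u)"
          have d': "\<delta>' > 0" using up by (simp add: \<delta>'_def)
          have VS: "{u - \<delta>'<..<u + \<delta>'} \<subseteq> {0<..<pi}" by (auto simp: \<delta>'_def)
          have im: "(\<lambda>t. u + \<delta>' * t) ` {-1<..<1} = ?K \<inter> {u - \<delta>'<..<u + \<delta>'}"
            using img_Ioo[OF d', of u] VS by auto
          have sub: "\<forall>t\<in>{-1<..<1}. u + \<delta>' * t \<in> {0<..<pi}" using img_Ioo[OF d', of u] VS by blast
          have G: "good {-1<..<1} (\<lambda>t. w (u + \<delta>' * t))"
            by (rule good_affine[OF goodI _ d' sub]) (use ntriv_Ioo in auto)
          have pB: "p \<notin> {w 0, w pi}"
          proof
            assume "p \<in> {w 0, w pi}"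
            hence "w u = w 0 \<or> w u = w pi" using u by simp
            moreover have "(0::real) \<in> ?K" "pi \<in> ?K" by auto
            ultimately have "u = 0 \<or> u = pi" using inj_onD[OF injK _ u(1)] by blast
            thus False using False False2 by simp
          qed
          from chart_aff[OF hom d' im open_greaterThanLessThan _ G] u pB
          show ?thesis by simp
        qed
      qed
    qed
  qed
qed


theorem lemma3p6:
  fixes f :: "complex poly"
  assumes "simple_zeros f"
  shows "(\<forall>(\<epsilon>::real) (z::real \<Rightarrow> complex) (w::real \<Rightarrow> complex).
            0 < \<epsilon> \<and>
            smooth_embedding {-\<epsilon><..<\<epsilon>} (\<lambda>x. (z x, w x)) \<and>
            (\<forall>x\<in>{-\<epsilon><..<\<epsilon>}. (z x, w x) \<in> M1 f) \<and>
            z 0 = 0 \<and>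
            (\<forall>x\<in>{-\<epsilon><..<\<epsilon>}. x \<noteq> 0 \<longrightarrow> z x \<noteq> 0) \<and>
            (\<forall>x\<in>{-\<epsilon><..<\<epsilon>}. z (- x) = - z x \<and> w (- x) = w x)
          \<longrightarrow> (let c = w ` {-\<epsilon><..<\<epsilon>}; \<eta> = (\<lambda>x. w (sqrt x)) in
                 smooth_embedding {0..<\<epsilon>\<^sup>2} \<eta> \<and> \<eta> ` {0..<\<epsilon>\<^sup>2} = c \<and>
                 regular_curve_with_boundary c {w 0}))
       \<and> (\<forall>(z::real \<Rightarrow> complex) (w::real \<Rightarrow> complex).
            symmetric_circle f z w \<longrightarrow>
            regular_curve_with_boundary (range w) {w 0, w pi})"
proof (intro conjI allI impI)
  fix \<epsilon> :: real and z w :: "real \<Rightarrow> complex"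
  assume H: "0 < \<epsilon> \<and>
            smooth_embedding {-\<epsilon><..<\<epsilon>} (\<lambda>x. (z x, w x)) \<and>
            (\<forall>x\<in>{-\<epsilon><..<\<epsilon>}. (z x, w x) \<in> M1 f) \<and>
            z 0 = 0 \<and>
            (\<forall>x\<in>{-\<epsilon><..<\<epsilon>}. x \<noteq> 0 \<longrightarrow> z x \<noteq> 0) \<and>
            (\<forall>x\<in>{-\<epsilon><..<\<epsilon>}. z (- x) = - z x \<and> w (- x) = w x)"
  show "let c = w ` {-\<epsilon><..<\<epsilon>}; \<eta> = (\<lambda>x. w (sqrt x)) in
                 smooth_embedding {0..<\<epsilon>\<^sup>2} \<eta> \<and> \<eta> ` {0..<\<epsilon>\<^sup>2} = c \<and>
                 regular_curve_with_boundary c {w 0}"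
    using part_a[of \<epsilon> z w f] H by blast
next
  fix z w :: "real \<Rightarrow> complex"
  assume "symmetric_circle f z w"
  thus "regular_curve_with_boundary (range w) {w 0, w pi}" by (rule part_b)
qed

end
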